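(* In the setting below, suppose $k_0$ satisfies $\operatorname{Im}\lambda(k_0)>0$ and the Jost solutions at $k_0$ are linearly dependent, $\phi(x,k_0)=b_0\,\psi(x,k_0)$ for all $x\in\mathbb{R}$ with a constant $b_0$ (as happens at a zero of $a$). Then $b_0^2=-1$, i.e. $b_0=\pm i$.
   Context: Setting: $q:\mathbb{R}\to\mathbb{C}$ with $q(x)\to q_\pm=q_0e^{i\theta_\pm}$ as $x\to\pm\infty$, $q_0>0$, $\theta_++\theta_-\equiv0\pmod{2\pi}$, $q-q_\pm$ integrable at $\pm\infty$. Scattering problem (nonlocal Sinh-Gordon/RST-NLS, $\sigma=1$): $v_x=\begin{pmatrix}-ik&q(x)\\ q(-x)&ik\end{pmatrix}v$, $\lambda=\sqrt{k^2-q_0^2}$. Jost solutions: $\phi$ is the solution with $\phi(x,k)\sim(\lambda+k,iq_+)^Te^{-i\lambda x}$ as $x\to-\infty$, and $\psi$ the solution with $\psi(x,k)\sim(-iq_+,\lambda+k)^Te^{i\lambda x}$ as $x\to+\infty$ (both exist and are nonzero for $\operatorname{Im}\lambda>0$). *)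

theory Defs
  imports "HOL-Analysis.Analysis"
begin

definition scat_rhs :: "(real \<Rightarrow> complex) \<Rightarrow> complex \<Rightarrow> real \<Rightarrow> complex \<times> complex \<Rightarrow> complex \<times> complex" where
  "scat_rhs q k x v = (- \<i> * k * fst v + q x * snd v, q (- x) * fst v + \<i> * k * snd v)"

definition is_scat_solution :: "(real \<Rightarrow> complex) \<Rightarrow> complex \<Rightarrow> (real \<Rightarrow> complex \<times> complex) \<Rightarrow> bool" where
  "is_scat_solution q k v \<longleftrightarrow>
     (\<forall>a b. a \<le> b \<longrightarrow> ((\<lambda>t. scat_rhs q k t (v t)) has_integral (v b - v a)) {a..b})"

definition jost_phi :: "(real \<Rightarrow> complex) \<Rightarrow> complex \<Rightarrow> complex \<Rightarrow> complex \<Rightarrow> (real \<Rightarrow> complex \<times> complex) \<Rightarrow> bool" where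
  "jost_phi q qp k lam phi \<longleftrightarrow> is_scat_solution q k phi \<and>
     ((\<lambda>x. exp (\<i> * lam * of_real x) * fst (phi x)) \<longlongrightarrow> lam + k) at_bot \<and>
     ((\<lambda>x. exp (\<i> * lam * of_real x) * snd (phi x)) \<longlongrightarrow> \<i> * qp) at_bot"

definition jost_psi :: "(real \<Rightarrow> complex) \<Rightarrow> complex \<Rightarrow> complex \<Rightarrow> complex \<Rightarrow> (real \<Rightarrow> complex \<times> complex) \<Rightarrow> bool" where
  "jost_psi q qp k lam psi \<longleftrightarrow> is_scat_solution q k psi \<and>
     ((\<lambda>x. exp (- \<i> * lam * of_real x) * fst (psi x)) \<longlongrightarrow> - \<i> * qp) at_top \<and>
     ((\<lambda>x. exp (- \<i> * lam * of_real x) * snd (psi x)) \<longlongrightarrow> lam + k) at_top"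

end

theory Submission
  imports Defs
begin

lemma abs_int_mult_cont:
  fixes f u :: "real \<Rightarrow> complex"
  assumes "f absolutely_integrable_on {a..b}" "continuous_on {a..b} u"
  shows "(\<lambda>r. u r * f r) absolutely_integrable_on {a..b}"
proof (rule absolutely_integrable_bounded_measurable_product[where h="(*)"])
  show "bilinear ((*) :: complex \<Rightarrow> complex \<Rightarrow> complex)"
    using bilinear_times by blast
  show "u \<in> borel_measurable (lebesgue_on {a..b})"
    by (simp add: assms(2) continuous_imp_measurable_on_sets_lebesgue)
  show "{a..b} \<in> sets lebesgue" by simp
  show "bounded (u ` {a..b})"
    by (simp add: assms(2) compact_continuous_image compact_imp_bounded)
qed (use assms in auto)

lemma zero_if_small:
  fixes X :: complex and K :: real
  assumes "\<And>e. e > 0 \<Longrightarrow> norm X \<le> e * K" "K \<ge> 0"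
  shows "X = 0"
proof (rule ccontr)
  assume "X \<noteq> 0"
  then have p: "norm X > 0" by simp
  define e where "e = norm X / (2 * (K + 1))"
  have e: "e > 0" using p assms(2) by (simp add: e_def)
  have "e * K < norm X"
  proof -
    have "e * K \<le> e * (K+1)" using e by simp
    also have "\<dots> = norm X / 2" using assms(2) by (simp add: e_def field_simps)
    finally show ?thesis using p by linarith
  qed
  with assms(1)[OF e] show False by simp
qed

lemma product_rule_int:
  fixes u v f g :: "real \<Rightarrow> complex"
  assumes ab: "a \<le> b"
    and cu: "continuous_on {a..b} u" and cv: "continuous_on {a..b} v"
    and fi: "f absolutely_integrable_on {a..b}" and gi: "g absolutely_integrable_on {a..b}"
    and hu: "\<And>s t. a \<le> s \<Longrightarrow> s \<le> t \<Longrightarrow> t \<le> b \<Longrightarrow> (f has_integral (u t - u s)) {s..t}"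
    and hv: "\<And>s t. a \<le> s \<Longrightarrow> s \<le> t \<Longrightarrow> t \<le> b \<Longrightarrow> (g has_integral (v t - v s)) {s..t}"
  shows "((\<lambda>r. f r * v r + u r * g r) has_integral (u b * v b - u a * v a)) {a..b}"
proof -
  define h where "h r = f r * v r + u r * g r" for r
  have fv: "(\<lambda>r. v r * f r) absolutely_integrable_on {a..b}"
    by (rule abs_int_mult_cont[OF fi cv])
  have ug: "(\<lambda>r. u r * g r) absolutely_integrable_on {a..b}"
    by (rule abs_int_mult_cont[OF gi cu])
  have fvi: "(\<lambda>r. f r * v r) integrable_on {a..b}"
    using fv by (simp add: absolutely_integrable_on_def mult.commute)
  have ugi: "(\<lambda>r. u r * g r) integrable_on {a..b}"
    using ug by (simp add: absolutely_integrable_on_def)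
  have fI: "f integrable_on {a..b}" and gI: "g integrable_on {a..b}"
    using fi gi by (auto simp: absolutely_integrable_on_def)
  have nfI: "(\<lambda>r. norm (f r) + norm (g r)) integrable_on {a..b}"
    using fi gi by (auto simp: absolutely_integrable_on_def intro!: integrable_add)
  have hI: "h integrable_on {a..b}"
    unfolding h_def using fvi ugi by (rule integrable_add)
  define P where "P t = u t * v t - integral {a..t} h" for t
  define G where "G t = integral {a..t} (\<lambda>r. norm (f r) + norm (g r))" for t
  have key: "\<exists>d>0. \<forall>s t. a \<le> s \<longrightarrow> s \<le> t \<longrightarrow> t \<le> b \<longrightarrow> t - s < d \<longrightarrow>
      norm (P t - P s) \<le> e * (G t - G s)" if e: "e > 0" for e
  proof -
    have "uniformly_continuous_on {a..b} u" "uniformly_continuous_on {a..b} v"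
      using cu cv compact_uniformly_continuous by auto
    then obtain d1 d2 where d1: "d1 > 0" "\<And>x y. x \<in> {a..b} \<Longrightarrow> y \<in> {a..b} \<Longrightarrow> dist y x < d1 \<Longrightarrow> dist (u y) (u x) < e"
      and d2: "d2 > 0" "\<And>x y. x \<in> {a..b} \<Longrightarrow> y \<in> {a..b} \<Longrightarrow> dist y x < d2 \<Longrightarrow> dist (v y) (v x) < e"
      unfolding uniformly_continuous_on_def using e by metis
    show ?thesis
    proof (intro exI[of _ "min d1 d2"] conjI allI impI)
      show "min d1 d2 > 0" using d1 d2 by simp
      fix s t assume st: "a \<le> s" "s \<le> t" "t \<le> b" "t - s < min d1 d2"
      have sub: "{s..t} \<subseteq> {a..b}" using st by auto
      have fvs: "(\<lambda>r. f r * v r) integrable_on {s..t}" using fvi sub integrable_subinterval_real by blast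
      have ugs: "(\<lambda>r. u r * g r) integrable_on {s..t}" using ugi sub integrable_subinterval_real by blast
      have fs: "f integrable_on {s..t}" using fI sub integrable_subinterval_real by blast
      have gs: "g integrable_on {s..t}" using gI sub integrable_subinterval_real by blast
      have hs: "h integrable_on {s..t}" using hI sub integrable_subinterval_real by blast
      have nfs: "(\<lambda>r. norm (f r) + norm (g r)) integrable_on {s..t}" using nfI sub integrable_subinterval_real by blast
      have hat: "h integrable_on {a..t}" by (rule integrable_subinterval_real[OF hI]) (use st in auto)
      have nfat: "(\<lambda>r. norm (f r) + norm (g r)) integrable_on {a..t}" by (rule integrable_subinterval_real[OF nfI]) (use st in auto)
      have Ih: "integral {a..t} h = integral {a..s} h + integral {s..t} h"
        using Henstock_Kurzweil_Integration.integral_combine[OF st(1) st(2) hat] by simp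
      have IG: "G t - G s = integral {s..t} (\<lambda>r. norm (f r) + norm (g r))"
        using Henstock_Kurzweil_Integration.integral_combine[OF st(1) st(2) nfat] by (simp add: G_def)
      have iu: "integral {s..t} f = u t - u s" using hu[OF st(1-3)] by (rule integral_unique)
      have iv: "integral {s..t} g = v t - v s" using hv[OF st(1-3)] by (rule integral_unique)
      have "u t * v t - u s * v s = (u t - u s) * v t + u s * (v t - v s)" by (simp add: algebra_simps)
      also have "\<dots> = integral {s..t} (\<lambda>r. f r * v t) + integral {s..t} (\<lambda>r. u s * g r)"
        by (simp add: iu iv)
      finally have uv: "u t * v t - u s * v s = integral {s..t} (\<lambda>r. f r * v t) + integral {s..t} (\<lambda>r. u s * g r)" .
      have i1: "(\<lambda>r. f r * v t) integrable_on {s..t}" using fs by (rule integrable_on_mult_left)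
      have i2: "(\<lambda>r. u s * g r) integrable_on {s..t}" using gs by (rule integrable_on_mult_right)
      have PP: "P t - P s = integral {s..t} (\<lambda>r. (f r * v t - f r * v r) + (u s * g r - u r * g r))"
      proof -
        have "P t - P s = (u t * v t - u s * v s) - integral {s..t} h"
          by (simp add: P_def Ih)
        also have "\<dots> = integral {s..t} (\<lambda>r. f r * v t) + integral {s..t} (\<lambda>r. u s * g r)
             - (integral {s..t} (\<lambda>r. f r * v r) + integral {s..t} (\<lambda>r. u r * g r))"
          unfolding uv h_def using integral_add[OF fvs ugs] by simp
        also have "\<dots> = integral {s..t} (\<lambda>r. (f r * v t - f r * v r) + (u s * g r - u r * g r))"
          using integral_add[OF integrable_diff[OF i1 fvs] integrable_diff[OF i2 ugs]]
            integral_diff[OF i1 fvs] integral_diff[OF i2 ugs] by simp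
        finally show ?thesis .
      qed
      have "norm (P t - P s) \<le> integral {s..t} (\<lambda>r. e * (norm (f r) + norm (g r)))"
        unfolding PP
      proof (rule integral_norm_bound_integral)
        show "(\<lambda>r. f r * v t - f r * v r + (u s * g r - u r * g r)) integrable_on {s..t}"
          by (intro integrable_add integrable_diff i1 i2 fvs ugs)
        show "(\<lambda>r. e * (norm (f r) + norm (g r))) integrable_on {s..t}"
          using nfs by (rule integrable_on_mult_right)
        fix r assume r: "r \<in> {s..t}"
        have ra: "r \<in> {a..b}" using r sub by auto
        have ta: "t \<in> {a..b}" "s \<in> {a..b}" using st by auto
        have "dist (v t) (v r) < e" using d2(2)[OF ra ta(1)] r st by (simp add: dist_real_def)
        hence nv: "norm (v t - v r) \<le> e" by (simp add: dist_norm)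
        have "dist (u s) (u r) < e" using d1(2)[OF ra ta(2)] r st by (simp add: dist_real_def)
        hence nu: "norm (u s - u r) \<le> e" by (simp add: dist_norm)
        have "norm (f r * v t - f r * v r + (u s * g r - u r * g r))
              = norm (f r * (v t - v r) + (u s - u r) * g r)" by (simp add: algebra_simps)
        also have "\<dots> \<le> norm (f r) * norm (v t - v r) + norm (u s - u r) * norm (g r)"
          by (metis norm_mult norm_triangle_ineq)
        also have "\<dots> \<le> norm (f r) * e + e * norm (g r)"
          by (intro add_mono mult_left_mono mult_right_mono nu nv) auto
        finally show "norm (f r * v t - f r * v r + (u s * g r - u r * g r)) \<le> e * (norm (f r) + norm (g r))"
          by (simp add: algebra_simps)
      qed
      also have "\<dots> = e * (G t - G s)" by (simp add: IG)
      finally show "norm (P t - P s) \<le> e * (G t - G s)" .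
    qed
  qed
  have Gmono: "G s \<le> G t" if "a \<le> s" "s \<le> t" "t \<le> b" for s t
  proof -
    have nfat: "(\<lambda>r. norm (f r) + norm (g r)) integrable_on {a..t}" by (rule integrable_subinterval_real[OF nfI]) (use that in auto)
    have "G t - G s = integral {s..t} (\<lambda>r. norm (f r) + norm (g r))"
      using Henstock_Kurzweil_Integration.integral_combine[OF that(1) that(2) nfat] by (simp add: G_def)
    also have "\<dots> \<ge> 0" by (rule integral_nonneg) (rule integrable_subinterval_real[OF nfI], use that in auto)
    finally show ?thesis by simp
  qed
  have PabZ: "P b - P a = 0"
  proof (rule zero_if_small)
    show "G b - G a \<ge> 0" using Gmono[of a b] ab by simp
    fix e :: real assume e: "e > 0"
    obtain d where d: "d > 0" and dd: "\<And>s t. a \<le> s \<Longrightarrow> s \<le> t \<Longrightarrow> t \<le> b \<Longrightarrow> t - s < d \<Longrightarrow>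
      norm (P t - P s) \<le> e * (G t - G s)" using key[OF e] by blast
    obtain N :: nat where N: "(b - a) / d < real N" using reals_Archimedean2 by blast
    have Npos: "N > 0" proof (rule ccontr) assume "\<not> N > 0" then have "(b - a) / d < 0" using N by simp moreover have "(b - a) / d \<ge> 0" using ab d by simp ultimately show False by simp qed
    define tt where "tt i = a + real i * (b - a) / real N" for i
    have tt0: "tt 0 = a" and ttN: "tt N = b" using Npos by (auto simp: tt_def)
    have ttm: "a \<le> tt i" "tt i \<le> tt (Suc i)" if "i < N" for i
      using ab Npos by (auto simp: tt_def field_simps mult_right_mono)
    have ttb: "tt (Suc i) \<le> b" if "i < N" for i
    proof -
      have "real (Suc i) * (b - a) \<le> real N * (b - a)" using that ab by (intro mult_right_mono) auto
      then show ?thesis using Npos by (simp add: tt_def field_simps)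
    qed
    have ttd: "tt (Suc i) - tt i < d" for i
    proof -
      have "tt (Suc i) - tt i = (b - a) / real N" using Npos by (simp add: tt_def field_simps)
      also have "\<dots> < d" using N d Npos by (simp add: field_simps)
      finally show ?thesis .
    qed
    have "P b - P a = (\<Sum>i<N. P (tt (Suc i)) - P (tt i))"
      using sum_lessThan_telescope[of "\<lambda>i. P (tt i)" N] by (simp add: tt0 ttN)
    hence "norm (P b - P a) \<le> (\<Sum>i<N. norm (P (tt (Suc i)) - P (tt i)))"
      by (simp add: norm_sum)
    also have "\<dots> \<le> (\<Sum>i<N. e * (G (tt (Suc i)) - G (tt i)))"
      by (intro sum_mono dd ttm ttb ttd) auto
    also have "\<dots> = e * (G b - G a)"
      using sum_lessThan_telescope[of "\<lambda>i. G (tt i)" N] by (simp add: sum_distrib_left[symmetric] tt0 ttN)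
    finally show "norm (P b - P a) \<le> e * (G b - G a)" .
  qed
  have "integral {a..b} h = u b * v b - u a * v a"
    using PabZ by (simp add: P_def algebra_simps)
  with hI show ?thesis unfolding h_def[abs_def] by (metis has_integral_integral)
qed


definition sol :: "(real \<Rightarrow> complex) \<Rightarrow> complex \<Rightarrow> (real \<Rightarrow> complex) \<Rightarrow> (real \<Rightarrow> complex) \<Rightarrow> bool" where
  "sol q k u1 u2 \<longleftrightarrow> (\<forall>a b. a \<le> b \<longrightarrow>
     ((\<lambda>t. - \<i> * k * u1 t + q t * u2 t) has_integral (u1 b - u1 a)) {a..b} \<and>
     ((\<lambda>t. q (- t) * u1 t + \<i> * k * u2 t) has_integral (u2 b - u2 a)) {a..b})"

lemma sol_of_scat:
  assumes "is_scat_solution q k v"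
  shows "sol q k (\<lambda>t. fst (v t)) (\<lambda>t. snd (v t))"
  unfolding sol_def
proof (intro allI impI conjI)
  fix a b :: real assume ab: "a \<le> b"
  have H: "((\<lambda>t. scat_rhs q k t (v t)) has_integral (v b - v a)) {a..b}"
    using assms ab by (simp add: is_scat_solution_def)
  from has_integral_linear[OF H bounded_linear_fst]
  show "((\<lambda>t. - \<i> * k * fst (v t) + q t * snd (v t)) has_integral (fst (v b) - fst (v a))) {a..b}"
    by (simp add: o_def scat_rhs_def)
  from has_integral_linear[OF H bounded_linear_snd]
  show "((\<lambda>t. q (- t) * fst (v t) + \<i> * k * snd (v t)) has_integral (snd (v b) - snd (v a))) {a..b}"
    by (simp add: o_def scat_rhs_def)
qed

lemma sol_reflect:
  assumes "sol q k u1 u2"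
  shows "sol q k (\<lambda>x. u2 (- x)) (\<lambda>x. - u1 (- x))"
  unfolding sol_def
proof (intro allI impI conjI)
  fix a b :: real assume ab: "a \<le> b"
  have ab': "- b \<le> - a" using ab by simp
  have H1: "((\<lambda>t. - \<i> * k * u1 t + q t * u2 t) has_integral (u1 (-a) - u1 (-b))) {-b..-a}"
   and H2: "((\<lambda>t. q (- t) * u1 t + \<i> * k * u2 t) has_integral (u2 (-a) - u2 (-b))) {-b..-a}"
    using assms ab' unfolding sol_def by blast+
  have R2: "((\<lambda>t. q t * u1 (-t) + \<i> * k * u2 (-t)) has_integral (u2 (-a) - u2 (-b))) {a..b}"
    using has_integral_reflect_real[of "\<lambda>t. q (- t) * u1 t + \<i> * k * u2 t" _ "-a" "-b"] H2 by simp
  have "((\<lambda>t. - (q t * u1 (-t) + \<i> * k * u2 (-t))) has_integral - (u2 (-a) - u2 (-b))) {a..b}"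
    using has_integral_neg[OF R2] .
  then show "((\<lambda>t. - \<i> * k * u2 (- t) + q t * - u1 (- t)) has_integral (u2 (- b) - u2 (- a))) {a..b}"
    by (simp add: algebra_simps)
  have R1: "((\<lambda>t. - \<i> * k * u1 (-t) + q (-t) * u2 (-t)) has_integral (u1 (-a) - u1 (-b))) {a..b}"
    using has_integral_reflect_real[of "\<lambda>t. - \<i> * k * u1 t + q t * u2 t" _ "-a" "-b"] H1 by simp
  then show "((\<lambda>t. q (- t) * u2 (- t) + \<i> * k * - u1 (- t)) has_integral (- u1 (- b) - - u1 (- a))) {a..b}"
    by (simp add: algebra_simps)
qed

lemma sol_lin:
  assumes "sol q k u1 u2" "sol q k v1 v2"
  shows "sol q k (\<lambda>x. u1 x - c * v1 x) (\<lambda>x. u2 x - c * v2 x)"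
  unfolding sol_def
proof (intro allI impI conjI)
  fix a b :: real assume ab: "a \<le> b"
  have A1: "((\<lambda>t. - \<i> * k * u1 t + q t * u2 t) has_integral (u1 b - u1 a)) {a..b}"
   and A2: "((\<lambda>t. q (- t) * u1 t + \<i> * k * u2 t) has_integral (u2 b - u2 a)) {a..b}"
   and B1: "((\<lambda>t. - \<i> * k * v1 t + q t * v2 t) has_integral (v1 b - v1 a)) {a..b}"
   and B2: "((\<lambda>t. q (- t) * v1 t + \<i> * k * v2 t) has_integral (v2 b - v2 a)) {a..b}"
    using assms ab unfolding sol_def by blast+
  from has_integral_diff[OF A1 has_integral_mult_right[OF B1, of c]]
  show "((\<lambda>t. - \<i> * k * (u1 t - c * v1 t) + q t * (u2 t - c * v2 t)) has_integral
     (u1 b - c * v1 b - (u1 a - c * v1 a))) {a..b}"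
    by (simp add: algebra_simps)
  from has_integral_diff[OF A2 has_integral_mult_right[OF B2, of c]]
  show "((\<lambda>t. q (- t) * (u1 t - c * v1 t) + \<i> * k * (u2 t - c * v2 t)) has_integral
     (u2 b - c * v2 b - (u2 a - c * v2 a))) {a..b}"
    by (simp add: algebra_simps)
qed

lemma cont_of_int:
  fixes u f :: "real \<Rightarrow> complex"
  assumes "\<And>a b. a \<le> b \<Longrightarrow> (f has_integral (u b - u a)) {a..b}"
  shows "continuous_on UNIV u"
proof (rule continuous_at_imp_continuous_on, intro ballI)
  fix x :: real
  let ?a = "x - 1" and ?b = "x + 1"
  have fi: "f integrable_on {?a..?b}" using assms[of ?a ?b] by auto
  have c1: "continuous_on {?a..?b} (\<lambda>t. u ?a + integral {?a..t} f)"
    by (intro continuous_intros indefinite_integral_continuous_1 fi)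
  have eq: "u t = u ?a + integral {?a..t} f" if "t \<in> {?a..?b}" for t
    using assms[of ?a t] that by (simp add: integral_unique)
  have "continuous_on {?a..?b} u"
    using continuous_on_eq[OF c1] eq by metis
  moreover have "x \<in> interior {?a..?b}" by simp
  ultimately show "isCont u x" using continuous_on_interior by blast
qed

lemma sol_cont:
  assumes "sol q k u1 u2"
  shows "continuous_on UNIV u1" "continuous_on UNIV u2"
  using assms unfolding sol_def by (auto intro: cont_of_int)


definition LI :: "(real \<Rightarrow> complex) \<Rightarrow> bool" where
  "LI q \<longleftrightarrow> (\<forall>a b. q absolutely_integrable_on {a..b})"

lemma LI_reflect: "LI q \<Longrightarrow> LI (\<lambda>x. q (- x))"
  unfolding LI_def
proof (intro allI)
  fix a b :: real assume "\<forall>a b. q absolutely_integrable_on {a..b}"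
  then have "q absolutely_integrable_on {-b..-a}" by blast
  then show "(\<lambda>x. q (- x)) absolutely_integrable_on {a..b}"
    using absolutely_integrable_reflect_real[where f=q and a="-b" and b="-a"] by simp
qed

lemma LI_norm_int: "LI q \<Longrightarrow> (\<lambda>x. norm (q x)) integrable_on {a..b}"
  unfolding LI_def absolutely_integrable_on_def by blast

lemma right_zero:
  assumes LI: "LI q" and S: "sol q k u1 u2" and z1: "u1 x0 = 0" and z2: "u2 x0 = 0"
  shows "\<exists>d>0. \<forall>t\<in>{x0..x0+d}. u1 t = 0 \<and> u2 t = 0"
proof -
  define m where "m r = norm k + norm (q r) + norm (q (- r))" for r
  have mI: "m integrable_on {a..b}" for a b
    unfolding m_def[abs_def]
    by (intro integrable_add integrable_const_ivl LI_norm_int LI LI_reflect)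
  have cF: "continuous_on {x0..x0+1} (\<lambda>t. integral {x0..t} m)"
    by (rule indefinite_integral_continuous_1[OF mI])
  have x0in: "x0 \<in> {x0..x0+1}" by simp
  obtain d0 where d0: "d0 > 0" and d0b': "\<And>t. t \<in> {x0..x0+1} \<Longrightarrow> dist t x0 < d0 \<Longrightarrow> dist (integral {x0..t} m) (integral {x0..x0} m) < 1/4"
    using cF x0in unfolding continuous_on_iff by (meson zero_less_divide_1_iff zero_less_numeral)
  have d0b: "norm (integral {x0..t} m) < 1/4" if "t \<in> {x0..x0+1}" "dist t x0 < d0" for t
    using d0b'[OF that] by (simp add: dist_norm)
  define d where "d = min (d0/2) 1"
  have d: "d > 0" using d0 by (simp add: d_def)
  have small: "integral {x0..t} m \<le> 1/4" if "t \<in> {x0..x0+d}" for t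
  proof -
    have "t \<in> {x0..x0+1}" "dist t x0 < d0" using that d0 by (auto simp: d_def dist_real_def)
    then show ?thesis using d0b[of t] by simp
  qed
  have mnn: "m r \<ge> 0" for r by (simp add: m_def)
  define N where "N t = norm (u1 t) + norm (u2 t)" for t
  have cN: "continuous_on {x0..x0+d} N"
    unfolding N_def using sol_cont[OF S]
    by (intro continuous_intros) (auto intro: continuous_on_subset)
  obtain ts where ts: "ts \<in> {x0..x0+d}" and tsmax: "\<And>t. t \<in> {x0..x0+d} \<Longrightarrow> N t \<le> N ts"
    using continuous_attains_sup[OF compact_Icc _ cN] d by auto
  define M where "M = N ts"
  have M0: "M \<ge> 0" by (simp add: M_def N_def)
  have sub: "{x0..ts} \<subseteq> {x0..x0+d}" using ts by auto
  have H1: "((\<lambda>t. - \<i> * k * u1 t + q t * u2 t) has_integral (u1 ts - u1 x0)) {x0..ts}"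
   and H2: "((\<lambda>t. q (- t) * u1 t + \<i> * k * u2 t) has_integral (u2 ts - u2 x0)) {x0..ts}"
    using S ts unfolding sol_def by auto
  have mM: "(\<lambda>r. M * m r) integrable_on {x0..ts}" by (intro integrable_on_mult_right mI)
  have b1: "norm (u1 ts) \<le> M * integral {x0..ts} m"
  proof -
    have "norm (u1 ts) = norm (integral {x0..ts} (\<lambda>t. - \<i> * k * u1 t + q t * u2 t))"
      using integral_unique[OF H1] z1 by simp
    also have "\<dots> \<le> integral {x0..ts} (\<lambda>r. M * m r)"
    proof (rule integral_norm_bound_integral)
      show "(\<lambda>t. - \<i> * k * u1 t + q t * u2 t) integrable_on {x0..ts}" using H1 by blast
      show "(\<lambda>r. M * m r) integrable_on {x0..ts}" by (rule mM)
      fix r assume r: "r \<in> {x0..ts}"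
      have NrM: "N r \<le> M" using tsmax[of r] r sub by (auto simp: M_def)
      have Nr: "norm (u1 r) \<le> M" "norm (u2 r) \<le> M"
        using NrM norm_ge_zero[of "u1 r"] norm_ge_zero[of "u2 r"] unfolding N_def by linarith+
      have "norm (- \<i> * k * u1 r + q r * u2 r) \<le> norm (- \<i> * k * u1 r) + norm (q r * u2 r)"
        by (rule norm_triangle_ineq)
      also have "\<dots> = norm k * norm (u1 r) + norm (q r) * norm (u2 r)" by (simp add: norm_mult)
      also have "\<dots> \<le> norm k * M + norm (q r) * M"
        by (intro add_mono mult_left_mono Nr) auto
      also have "\<dots> \<le> M * m r" using M0 by (simp add: m_def algebra_simps)
      finally show "norm (- \<i> * k * u1 r + q r * u2 r) \<le> M * m r" .
    qed
    also have "\<dots> = M * integral {x0..ts} m" by (simp add: Henstock_Kurzweil_Integration.integral_mult_right)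
    finally show ?thesis .
  qed
  have b2: "norm (u2 ts) \<le> M * integral {x0..ts} m"
  proof -
    have "norm (u2 ts) = norm (integral {x0..ts} (\<lambda>t. q (- t) * u1 t + \<i> * k * u2 t))"
      using integral_unique[OF H2] z2 by simp
    also have "\<dots> \<le> integral {x0..ts} (\<lambda>r. M * m r)"
    proof (rule integral_norm_bound_integral)
      show "(\<lambda>t. q (- t) * u1 t + \<i> * k * u2 t) integrable_on {x0..ts}" using H2 by blast
      show "(\<lambda>r. M * m r) integrable_on {x0..ts}" by (rule mM)
      fix r assume r: "r \<in> {x0..ts}"
      have NrM: "N r \<le> M" using tsmax[of r] r sub by (auto simp: M_def)
      have Nr: "norm (u1 r) \<le> M" "norm (u2 r) \<le> M"
        using NrM norm_ge_zero[of "u1 r"] norm_ge_zero[of "u2 r"] unfolding N_def by linarith+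
      have "norm (q (- r) * u1 r + \<i> * k * u2 r) \<le> norm (q (- r) * u1 r) + norm (\<i> * k * u2 r)"
        by (rule norm_triangle_ineq)
      also have "\<dots> = norm (q (- r)) * norm (u1 r) + norm k * norm (u2 r)" by (simp add: norm_mult)
      also have "\<dots> \<le> norm (q (- r)) * M + norm k * M"
        by (intro add_mono mult_left_mono Nr) auto
      also have "\<dots> \<le> M * m r" using M0 by (simp add: m_def algebra_simps)
      finally show "norm (q (- r) * u1 r + \<i> * k * u2 r) \<le> M * m r" .
    qed
    also have "\<dots> = M * integral {x0..ts} m" by (simp add: Henstock_Kurzweil_Integration.integral_mult_right)
    finally show ?thesis .
  qed
  have "M \<le> 2 * M * integral {x0..ts} m"
  proof -
    have "M = norm (u1 ts) + norm (u2 ts)" by (simp add: M_def N_def)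
    also have "\<dots> \<le> M * integral {x0..ts} m + M * integral {x0..ts} m" using b1 b2 by (rule add_mono)
    finally show ?thesis by simp
  qed
  also have "\<dots> \<le> 2 * M * (1/4)" using small[OF ts] M0 by (intro mult_left_mono) auto
  finally have "M = 0" using M0 by simp
  have "N t = 0" if "t \<in> {x0..x0+d}" for t
  proof -
    have "N t \<le> 0" using tsmax[OF that] \<open>M = 0\<close> by (simp add: M_def)
    moreover have "N t \<ge> 0" by (simp add: N_def)
    ultimately show ?thesis by simp
  qed
  then show ?thesis using d by (intro exI[of _ d]) (auto simp: N_def add_nonneg_eq_0_iff)
qed


lemma sol_unique:
  assumes LI: "LI q" and S: "sol q k u1 u2" and z1: "u1 x0 = 0" and z2: "u2 x0 = 0"
  shows "u1 x = 0 \<and> u2 x = 0"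
proof -
  define Z where "Z = {x. u1 x = 0} \<inter> {x. u2 x = 0}"
  have cl: "closed Z" unfolding Z_def
    using sol_cont[OF S] by (intro closed_Int closed_Collect_eq continuous_on_const) auto
  have op: "open Z"
  proof (rule openI)
    fix x assume "x \<in> Z"
    then have zx: "u1 x = 0" "u2 x = 0" by (auto simp: Z_def)
    obtain d1 where d1: "d1 > 0" "\<forall>t\<in>{x..x+d1}. u1 t = 0 \<and> u2 t = 0"
      using right_zero[OF LI S zx] by blast
    have SR: "sol q k (\<lambda>x. u2 (- x)) (\<lambda>x. - u1 (- x))" by (rule sol_reflect[OF S])
    obtain d2 where d2: "d2 > 0" "\<forall>t\<in>{-x..-x+d2}. u2 (- t) = 0 \<and> - u1 (- t) = 0"
      using right_zero[OF LI SR, of "-x"] zx by auto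
    show "\<exists>e>0. ball x e \<subseteq> Z"
    proof (intro exI[of _ "min d1 d2"] conjI subsetI)
      show "min d1 d2 > 0" using d1 d2 by simp
      fix y assume "y \<in> ball x (min d1 d2)"
      then have y: "\<bar>y - x\<bar> < d1" "\<bar>y - x\<bar> < d2" by (auto simp: dist_real_def)
      show "y \<in> Z"
      proof (cases "x \<le> y")
        case True
        then show ?thesis using d1(2) y by (auto simp: Z_def)
      next
        case False
        then have "- y \<in> {-x..-x+d2}" using y by auto
        then show ?thesis using d2(2)[rule_format, of "-y"] by (auto simp: Z_def)
      qed
    qed
  qed
  have "x0 \<in> Z" using z1 z2 by (simp add: Z_def)
  then have "Z = UNIV" using clopen[of Z] cl op by auto
  then show ?thesis by (auto simp: Z_def)
qed

lemma rhs_absint: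
  fixes q u1 u2 :: "real \<Rightarrow> complex" and c :: complex
  assumes "LI q" "continuous_on UNIV u1" "continuous_on UNIV u2"
  shows "(\<lambda>t. c * u1 t + q t * u2 t) absolutely_integrable_on {a..b}"
proof -
  have A: "(\<lambda>t. u2 t * q t) absolutely_integrable_on {a..b}"
    using assms by (intro abs_int_mult_cont) (auto simp: LI_def intro: continuous_on_subset)
  have B: "(\<lambda>t. c * u1 t) absolutely_integrable_on {a..b}"
    using assms(2) by (intro absolutely_integrable_continuous_real continuous_intros) (auto intro: continuous_on_subset)
  have "(\<lambda>t. c * u1 t + u2 t * q t) absolutely_integrable_on {a..b}"
    using set_integral_add(1)[OF B A] .
  then show ?thesis by (simp add: mult.commute)
qed

lemma wronsk_le:
  assumes LI: "LI q" and S: "sol q k u1 u2" and T: "sol q k v1 v2" and ab: "a \<le> b"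
  shows "u1 b * v2 b - u2 b * v1 b = u1 a * v2 a - u2 a * v1 a"
proof -
  note cu = sol_cont[OF S] and cv = sol_cont[OF T]
  have LIr: "LI (\<lambda>t. q (- t))" by (rule LI_reflect[OF LI])
  define F1 where "F1 t = - \<i> * k * u1 t + q t * u2 t" for t
  define F2 where "F2 t = q (- t) * u1 t + \<i> * k * u2 t" for t
  define G1 where "G1 t = - \<i> * k * v1 t + q t * v2 t" for t
  define G2 where "G2 t = q (- t) * v1 t + \<i> * k * v2 t" for t
  have aF1: "F1 absolutely_integrable_on {a..b}" unfolding F1_def[abs_def]
    by (rule rhs_absint[OF LI cu])
  have aG1: "G1 absolutely_integrable_on {a..b}" unfolding G1_def[abs_def]
    by (rule rhs_absint[OF LI cv])
  have aF2: "F2 absolutely_integrable_on {a..b}"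
    using rhs_absint[OF LIr cu(2) cu(1), where c="\<i> * k" and a=a and b=b] unfolding F2_def[abs_def] by (simp add: add.commute)
  have aG2: "G2 absolutely_integrable_on {a..b}"
    using rhs_absint[OF LIr cv(2) cv(1), where c="\<i> * k" and a=a and b=b] unfolding G2_def[abs_def] by (simp add: add.commute)
  have hF1: "(F1 has_integral (u1 t - u1 s)) {s..t}" if "s \<le> t" for s t
    using S that unfolding sol_def F1_def[abs_def] by blast
  have hF2: "(F2 has_integral (u2 t - u2 s)) {s..t}" if "s \<le> t" for s t
    using S that unfolding sol_def F2_def[abs_def] by blast
  have hG1: "(G1 has_integral (v1 t - v1 s)) {s..t}" if "s \<le> t" for s t
    using T that unfolding sol_def G1_def[abs_def] by blast
  have hG2: "(G2 has_integral (v2 t - v2 s)) {s..t}" if "s \<le> t" for s t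
    using T that unfolding sol_def G2_def[abs_def] by blast
  have P1: "((\<lambda>r. F1 r * v2 r + u1 r * G2 r) has_integral (u1 b * v2 b - u1 a * v2 a)) {a..b}"
    by (rule product_rule_int[OF ab _ _ aF1 aG2 hF1 hG2])
       (use cu cv in \<open>auto intro: continuous_on_subset\<close>)
  have P2: "((\<lambda>r. F2 r * v1 r + u2 r * G1 r) has_integral (u2 b * v1 b - u2 a * v1 a)) {a..b}"
    by (rule product_rule_int[OF ab _ _ aF2 aG1 hF2 hG1])
       (use cu cv in \<open>auto intro: continuous_on_subset\<close>)
  have D: "((\<lambda>r. (F1 r * v2 r + u1 r * G2 r) - (F2 r * v1 r + u2 r * G1 r)) has_integral
      ((u1 b * v2 b - u1 a * v2 a) - (u2 b * v1 b - u2 a * v1 a))) {a..b}"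
    by (rule has_integral_diff[OF P1 P2])
  have "(\<lambda>r. (F1 r * v2 r + u1 r * G2 r) - (F2 r * v1 r + u2 r * G1 r)) = (\<lambda>r. 0)"
    by (rule ext) (simp add: F1_def F2_def G1_def G2_def algebra_simps)
  with D have "((\<lambda>r. 0) has_integral ((u1 b * v2 b - u1 a * v2 a) - (u2 b * v1 b - u2 a * v1 a))) {a..b}"
    by simp
  then have "(u1 b * v2 b - u1 a * v2 a) - (u2 b * v1 b - u2 a * v1 a) = 0"
    using has_integral_0 has_integral_unique by blast
  then show ?thesis by (simp add: algebra_simps)
qed

lemma wronsk:
  assumes LI: "LI q" and S: "sol q k u1 u2" and T: "sol q k v1 v2"
  shows "u1 b * v2 b - u2 b * v1 b = u1 a * v2 a - u2 a * v1 a"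
  using wronsk_le[OF LI S T, of a b] wronsk_le[OF LI S T, of b a] by (cases "a \<le> b") auto

lemma LI_from:
  fixes q :: "real \<Rightarrow> complex"
  assumes t: "(\<lambda>x. q x - c1) absolutely_integrable_on {0..}"
    and b: "(\<lambda>x. q x - c2) absolutely_integrable_on {..0}"
  shows "LI q"
  unfolding LI_def
proof (intro allI)
  fix a b' :: real
  define A where "A = min a 0"
  define B where "B = max b' 0"
  have c1: "(\<lambda>x. c1) absolutely_integrable_on {0..B}"
    by (intro absolutely_integrable_continuous_real continuous_on_const)
  have "(\<lambda>x. q x - c1) absolutely_integrable_on cbox 0 B"
    by (rule absolutely_integrable_on_subcbox[OF t]) auto
  then have "(\<lambda>x. q x - c1) absolutely_integrable_on {0..B}" by simp
  from set_integral_add(1)[OF this c1] have qB: "q absolutely_integrable_on {0..B}" by simp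
  have c2: "(\<lambda>x. c2) absolutely_integrable_on {A..0}"
    by (intro absolutely_integrable_continuous_real continuous_on_const)
  have "(\<lambda>x. q x - c2) absolutely_integrable_on cbox A 0"
    by (rule absolutely_integrable_on_subcbox[OF b]) auto
  then have "(\<lambda>x. q x - c2) absolutely_integrable_on {A..0}" by simp
  from set_integral_add(1)[OF this c2] have qA: "q absolutely_integrable_on {A..0}" by simp
  have "q absolutely_integrable_on ({A..0} \<union> {0..B})" by (rule absolutely_integrable_Un[OF qA qB])
  moreover have "{A..0} \<union> {0..B} = {A..B}" by (auto simp: A_def B_def)
  ultimately have "q absolutely_integrable_on cbox A B" by simp
  then have "q absolutely_integrable_on cbox a b'"
    by (rule absolutely_integrable_on_subcbox) (auto simp: A_def B_def)
  then show "q absolutely_integrable_on {a..b'}" by simp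
qed


lemma exp_lim_bot:
  fixes lam :: complex
  assumes "Im lam > 0"
  shows "((\<lambda>x::real. exp (- \<i> * lam * of_real x)) \<longlongrightarrow> 0) at_bot"
proof -
  have "LIM x at_bot. (\<lambda>x. Im lam) x * (x::real) :> at_bot"
    by (rule filterlim_tendsto_pos_mult_at_bot[OF tendsto_const assms filterlim_ident])
  then have "((\<lambda>x::real. exp (Im lam * x)) \<longlongrightarrow> 0) at_bot"
    using filterlim_compose[OF exp_at_bot] by auto
  moreover have "norm (exp (- \<i> * lam * of_real x)) = exp (Im lam * x)" for x :: real
    by (simp add: norm_exp_eq_Re)
  ultimately show ?thesis
    by (subst tendsto_norm_zero_iff[symmetric]) simp
qed

theorem mainTheorem7:
  fixes q :: "real \<Rightarrow> complex" and q0 \<theta>p \<theta>m :: real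
    and k0 lam b0 :: complex and phi psi :: "real \<Rightarrow> complex \<times> complex"
  assumes q0_pos: "q0 > 0"
    and theta: "\<exists>n::int. \<theta>p + \<theta>m = 2 * pi * of_int n"
    and lim_top: "(q \<longlongrightarrow> of_real q0 * exp (\<i> * of_real \<theta>p)) at_top"
    and lim_bot: "(q \<longlongrightarrow> of_real q0 * exp (\<i> * of_real \<theta>m)) at_bot"
    and int_top: "(\<lambda>x. q x - of_real q0 * exp (\<i> * of_real \<theta>p)) absolutely_integrable_on {0..}"
    and int_bot: "(\<lambda>x. q x - of_real q0 * exp (\<i> * of_real \<theta>m)) absolutely_integrable_on {..0}"
    and lam_sq: "lam\<^sup>2 = k0\<^sup>2 - (of_real q0)\<^sup>2"
    and lam_im: "Im lam > 0"
    and phi: "jost_phi q (of_real q0 * exp (\<i> * of_real \<theta>p)) k0 lam phi"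
    and psi: "jost_psi q (of_real q0 * exp (\<i> * of_real \<theta>p)) k0 lam psi"
    and dep: "\<forall>x. phi x = (b0 * fst (psi x), b0 * snd (psi x))"
  shows "b0\<^sup>2 = -1"
proof -
  define qp where "qp = of_real q0 * exp (\<i> * of_real \<theta>p)"
  have LI: "LI q" by (rule LI_from[OF int_top int_bot])
  define p1 where "p1 t = fst (phi t)" for t
  define p2 where "p2 t = snd (phi t)" for t
  define s1 where "s1 t = snd (psi (- t))" for t
  define s2 where "s2 t = - fst (psi (- t))" for t
  have Sp: "sol q k0 p1 p2" unfolding p1_def[abs_def] p2_def[abs_def]
    using phi by (intro sol_of_scat) (simp add: jost_phi_def)
  have Spsi: "sol q k0 (\<lambda>t. fst (psi t)) (\<lambda>t. snd (psi t))"
    using psi by (intro sol_of_scat) (simp add: jost_psi_def)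
  have Sw: "sol q k0 s1 s2" unfolding s1_def[abs_def] s2_def[abs_def]
    using sol_reflect[OF Spsi] by simp
  define e where "e x = exp (\<i> * lam * of_real x)" for x :: real
  have Lp1: "((\<lambda>x. p1 x * e x) \<longlongrightarrow> lam + k0) at_bot"
    using phi by (simp add: jost_phi_def p1_def e_def mult.commute)
  have Lp2: "((\<lambda>x. p2 x * e x) \<longlongrightarrow> \<i> * qp) at_bot"
    using phi by (simp add: jost_phi_def p2_def e_def qp_def mult.commute)
  have Tpsi1: "((\<lambda>x. exp (- \<i> * lam * of_real x) * fst (psi x)) \<longlongrightarrow> - \<i> * qp) at_top"
   and Tpsi2: "((\<lambda>x. exp (- \<i> * lam * of_real x) * snd (psi x)) \<longlongrightarrow> lam + k0) at_top"
    using psi by (simp_all add: jost_psi_def qp_def)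
  have Ls1: "((\<lambda>x. s1 x * e x) \<longlongrightarrow> lam + k0) at_bot"
  proof -
    have "((\<lambda>x. exp (- \<i> * lam * of_real (- x)) * snd (psi (- x))) \<longlongrightarrow> lam + k0) at_bot"
      using filterlim_compose[OF Tpsi2 filterlim_uminus_at_top_at_bot] by (simp add: o_def)
    then show ?thesis by (simp add: s1_def e_def mult.commute)
  qed
  have Ls2: "((\<lambda>x. s2 x * e x) \<longlongrightarrow> \<i> * qp) at_bot"
  proof -
    have "((\<lambda>x. exp (- \<i> * lam * of_real (- x)) * fst (psi (- x))) \<longlongrightarrow> - \<i> * qp) at_bot"
      using filterlim_compose[OF Tpsi1 filterlim_uminus_at_top_at_bot] by (simp add: o_def)
    from tendsto_minus[OF this] show ?thesis by (simp add: s2_def e_def mult.commute)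
  qed
  define C where "C = p1 0 * s2 0 - p2 0 * s1 0"
  have WC: "p1 x * s2 x - p2 x * s1 x = C" for x
    unfolding C_def by (rule wronsk[OF LI Sp Sw])
  have C0: "C = 0"
  proof -
    have L1: "((\<lambda>x. (p1 x * e x) * (s2 x * e x) - (p2 x * e x) * (s1 x * e x)) \<longlongrightarrow>
       (lam + k0) * (\<i> * qp) - (\<i> * qp) * (lam + k0)) at_bot"
      by (intro tendsto_intros Lp1 Lp2 Ls1 Ls2)
    have L2: "((\<lambda>x. exp (- \<i> * lam * of_real x) * exp (- \<i> * lam * of_real x)) \<longlongrightarrow> 0 * 0) at_bot"
      by (intro tendsto_mult exp_lim_bot lam_im)
    have L3: "((\<lambda>x. ((p1 x * e x) * (s2 x * e x) - (p2 x * e x) * (s1 x * e x)) *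
        (exp (- \<i> * lam * of_real x) * exp (- \<i> * lam * of_real x))) \<longlongrightarrow> 0) at_bot"
      using tendsto_mult[OF L1 L2] by simp
    have eq: "((p1 x * e x) * (s2 x * e x) - (p2 x * e x) * (s1 x * e x)) *
        (exp (- \<i> * lam * of_real x) * exp (- \<i> * lam * of_real x)) = C" for x
    proof -
      have ee: "e x * exp (- \<i> * lam * of_real x) = 1"
        by (simp add: e_def exp_add[symmetric])
      have "((p1 x * e x) * (s2 x * e x) - (p2 x * e x) * (s1 x * e x)) *
        (exp (- \<i> * lam * of_real x) * exp (- \<i> * lam * of_real x))
        = (p1 x * s2 x - p2 x * s1 x) * (e x * exp (- \<i> * lam * of_real x)) * (e x * exp (- \<i> * lam * of_real x))"
        by (simp add: algebra_simps)
      also have "\<dots> = C" using WC[of x] ee by simp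
      finally show ?thesis .
    qed
    have "((\<lambda>x::real. C) \<longlongrightarrow> 0) at_bot"
      using L3 by (simp only: eq)
    then show ?thesis by (simp add: tendsto_const_iff)
  qed
  have lk: "lam + k0 \<noteq> 0"
  proof
    assume "lam + k0 = 0"
    then have "lam = - k0" by (simp add: add_eq_0_iff)
    then have "(of_real q0 :: complex)\<^sup>2 = 0" using lam_sq by (simp add: power2_eq_square)
    then show False using q0_pos by simp
  qed
  have "\<forall>\<^sub>F x in at_bot. p1 x * e x \<noteq> 0" by (rule tendsto_imp_eventually_ne[OF Lp1 lk])
  then obtain x0 where "p1 x0 * e x0 \<noteq> 0"
    by (meson eventually_happens trivial_limit_at_bot_linorder)
  then have p10: "p1 x0 \<noteq> 0" by simp
  define c where "c = s1 x0 / p1 x0"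
  have SD: "sol q k0 (\<lambda>x. s1 x - c * p1 x) (\<lambda>x. s2 x - c * p2 x)" by (rule sol_lin[OF Sw Sp])
  have D1: "s1 x0 - c * p1 x0 = 0" using p10 by (simp add: c_def)
  have D2: "s2 x0 - c * p2 x0 = 0"
  proof -
    have "p1 x0 * s2 x0 = p2 x0 * s1 x0" using WC[of x0] C0 by simp
    then show ?thesis using p10 by (simp add: c_def field_simps)
  qed
  have wc: "s1 x = c * p1 x \<and> s2 x = c * p2 x" for x
    using sol_unique[OF LI SD D1 D2, of x] by simp
  have c1: "c = 1"
  proof -
    have "((\<lambda>x. s1 x * e x) \<longlongrightarrow> c * (lam + k0)) at_bot"
      using tendsto_mult[OF tendsto_const Lp1, of c] wc by (simp add: mult.assoc)
    with Ls1 have "c * (lam + k0) = lam + k0"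
      using tendsto_unique trivial_limit_at_bot_linorder by blast
    then show ?thesis using lk by simp
  qed
  have ps: "p1 x = b0 * fst (psi x)" "p2 x = b0 * snd (psi x)" for x
    using dep by (auto simp: p1_def p2_def)
  have f0: "fst (psi x0) \<noteq> 0" using p10 ps(1)[of x0] by auto
  have e1: "snd (psi (- x0)) = b0 * fst (psi x0)"
    using wc[of x0] c1 ps(1)[of x0] by (simp add: s1_def)
  have e2: "- fst (psi x0) = b0 * snd (psi (- x0))"
    using wc[of "- x0"] c1 ps(2)[of "- x0"] by (simp add: s2_def)
  have "- fst (psi x0) = b0\<^sup>2 * fst (psi x0)" using e1 e2 by (simp add: power2_eq_square)
  then have h: "b0\<^sup>2 * fst (psi x0) = (-1) * fst (psi x0)" by simp
  show ?thesis using h f0 mult_cancel_right[of "b0\<^sup>2" "fst (psi x0)" "-1"] by blast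
qed

end
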